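(* Let $\alpha\in(0,\kappa(\mathbf{A})^{-1/2})$ and let $\lambda>0$ satisfy $\alpha\le\kappa(\mathbf{A})^{-1/2}(1-\|\mathbf{A}\|\lambda^2)^{1/2}$. Let $\Lambda=\Lambda_0\times\cdots\times\Lambda_J\subset\mathcal{G}$ be a finite product set and $\mathbf{w}_\Lambda\in\ell_2(\mathcal{G})$ with $\operatorname{supp}\mathbf{w}_\Lambda\subseteq\Lambda$. Assume that $\pi^{(0)}(\mathbf{u})\in\mathcal{A}^{s_1}(\mathcal{G}_0)$ and $\pi^{(j)}(\mathbf{u})\in\mathcal{A}^{s_2}(\mathcal{G}_j)$ for $j=1,\dots,J$, with $s_1,s_2>0$. Let $\Lambda^*=\Lambda^*_0\times\cdots\times\Lambda^*_J\subset\mathcal{G}$ be a minimizer of $\sum_{j=0}^J\#(\Lambda^*_j\setminus\Lambda_j)$ among the product sets satisfying \[\|\mathbf{R}_{\Lambda^*}(\mathbf{A}\mathbf{w}_\Lambda-\mathbf{f})\|\ge\alpha\|\mathbf{A}\mathbf{w}_\Lambda-\mathbf{f}\|.\] Then \[ \sum_{j=0}^J\#(\Lambda^*_j\setminus\Lambda_j)\le 2C^{1/s_1}\|\mathbf{A}\mathbf{w}_\Lambda-\mathbf{f}\|^{-1/s_1}\|\pi^{(0)}(\mathbf{u})\|_{\mathcal{A}^{s_1}}^{1/s_1}+2C^{1/s_2}\|\mathbf{A}\mathbf{w}_\Lambda-\mathbf{f}\|^{-1/s_2}\sum_{j=1}^J\|\pi^{(j)}(\mathbf{u})\|_{\mathcal{A}^{s_2}}^{1/s_2},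 \] where $C=(J+1)\sqrt{\|\mathbf{A}\|}/\lambda$.
   Context: Parametric problem: $D\subset\mathbb{R}^d$ a domain, $V=H^1_0(D)$, $f\in L_2(D)$, $a(x,y)=\bar a(x)+\sum_{j\ge1}y_j\theta_j(x)$ with $\bar a,\theta_j\in L_\infty(D)$, $y\in Y=[-1,1]^{\mathbb{N}}$, and $\bar a-\sum_j|\theta_j|\ge r>0$. Let $\sigma$ be the uniform product probability measure on $Y$, $\mathcal{F}=\{\nu\in\mathbb{N}_0^{\mathbb{N}}:$ finitely many nonzero entries$\}$, $L_\nu(y)=\prod_i L_{\nu_i}(y_i)$ the $L_2(Y;\sigma)$-orthonormal product Legendre polynomials, and $\{\psi_\lambda\}_{\lambda\in\mathcal{S}}$ a Riesz basis of $V$. The operator $\mathbf{A}$ on $\ell_2(\mathcal{F}\times\mathcal{S})$ has entries $\mathbf{A}_{(\nu,\lambda),(\nu',\lambda')}=\int_Y\int_D a(x,y)\nabla\psi_{\lambda'}\cdot\nabla\psi_\lambda\,L_\nu L_{\nu'}\,dx\,d\sigma(y)$, and $\mathbf{f}_{(\nu,\lambda)}=\int_D f\psi_\lambda\,dx\int_Y L_\nu\,d\sigma$; $\mathbf{A}$ is bounded, symmetric and positive definite on $\ell_2$, $\kappa(\mathbf{A})=\|\mathbf{A}\|\|\mathbf{A}^{-1}\|$, and $\mathbf{u}$ is the solution of $\mathbf{A}\mathbf{u}=\mathbf{f}$. Fix $J\ge1$ and identify $\mathcal{F}\times\mathcal{S}$ with $\mathcal{G}=\mathcal{G}_0\times\mathcal{G}_1\times\cdots\times\mathcal{G}_J$,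 where $\mathcal{G}_0=\mathcal{F}\times\mathcal{S}$ (index $(\bar\nu,\lambda)$ with $\bar\nu=(\nu_{J+1},\nu_{J+2},\dots)$ the tail multi-index) and $\mathcal{G}_j=\mathbb{N}_0$ (index $\nu_j$) for $j=1,\dots,J$. $\|\cdot\|$ denotes the $\ell_2$ norm; a product set is $\Lambda_0\times\cdots\times\Lambda_J$ with $\Lambda_j\subseteq\mathcal{G}_j$; $\mathbf{R}_\Lambda$ is pointwise multiplication by the indicator of $\Lambda$. Contractions of $\mathbf{v}\in\ell_2(\mathcal{G})$: $\pi^{(0)}(\mathbf{v})\in\ell_2(\mathcal{G}_0)$ with $\pi^{(0)}_{(\bar\nu,\lambda)}(\mathbf{v})=(\sum_{(\nu_1,\dots,\nu_J)}|\mathbf{v}_{(\bar\nu,\lambda),\nu_1,\dots,\nu_J}|^2)^{1/2}$, and for $j=1,\dots,J$, $\pi^{(j)}(\mathbf{v})\in\ell_2(\mathcal{G}_j)$ with $\pi^{(j)}_{\nu_j}(\mathbf{v})=(\sum_{(\bar\nu,\lambda)}\sum_{\nu_i,\,i\neq j}|\mathbf{v}_{(\bar\nu,\lambda),\nu_1,\dots,\nu_J}|^2)^{1/2}$. Approximation classes: for a countable set $\mathcal{H}$ and $s>0$, $\mathcal{A}^s(\mathcal{H})$ is the set of $\mathbf{v}\in\ell_2(\mathcal{H})$ with $\|\mathbf{v}\|_{\mathcal{A}^s}:=\sup_{N\in\mathbb{N}_0}(N+1)^s\inf_{\#\operatorname{supp}\mathbf{v}_N\le N}\|\mathbf{v}-\mathbf{v}_N\|<\infty$.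 *)

theory Defs
  imports "HOL-Analysis.Analysis"
begin

text \<open>Index set G = G_0 x G_1 x ... x G_J, with G_0 an arbitrary type 'a
  (standing for F x S) and G_j = nat for j = 1..J.\<close>

definition Gset :: "nat \<Rightarrow> ('a \<times> (nat \<Rightarrow> nat)) set" where
  "Gset J = UNIV \<times> ({1..J} \<rightarrow>\<^sub>E UNIV)"

definition is_l2 :: "'b set \<Rightarrow> ('b \<Rightarrow> real) \<Rightarrow> bool" where
  "is_l2 H v \<longleftrightarrow> (\<forall>x. x \<notin> H \<longrightarrow> v x = 0) \<and> (\<lambda>x. (v x)^2) summable_on H"

definition l2norm :: "('b \<Rightarrow> real) \<Rightarrow> real" where
  "l2norm v = sqrt (infsum (\<lambda>x. (v x)^2) UNIV)"

definition l2inner :: "('b \<Rightarrow> real) \<Rightarrow> ('b \<Rightarrow> real) \<Rightarrow> real" where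
  "l2inner v w = infsum (\<lambda>x. v x * w x) UNIV"

text \<open>Operator norm of A on l2(H) and norm of its inverse
  (for a bijective A, sup ||v||/||Av|| = ||A^{-1}||).\<close>
definition opnorm :: "'b set \<Rightarrow> (('b \<Rightarrow> real) \<Rightarrow> ('b \<Rightarrow> real)) \<Rightarrow> real" where
  "opnorm H A = Sup {l2norm (A v) / l2norm v | v. is_l2 H v \<and> v \<noteq> (\<lambda>_. 0)}"

definition invnorm :: "'b set \<Rightarrow> (('b \<Rightarrow> real) \<Rightarrow> ('b \<Rightarrow> real)) \<Rightarrow> real" where
  "invnorm H A = Sup {l2norm v / l2norm (A v) | v. is_l2 H v \<and> v \<noteq> (\<lambda>_. 0)}"

definition cond_number :: "'b set \<Rightarrow> (('b \<Rightarrow> real) \<Rightarrow> ('b \<Rightarrow> real)) \<Rightarrow> real" where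
  "cond_number H A = opnorm H A * invnorm H A"

definition bounded_spd :: "'b set \<Rightarrow> (('b \<Rightarrow> real) \<Rightarrow> ('b \<Rightarrow> real)) \<Rightarrow> bool" where
  "bounded_spd H A \<longleftrightarrow>
     (\<forall>v. is_l2 H v \<longrightarrow> is_l2 H (A v)) \<and>
     (\<forall>v w. is_l2 H v \<longrightarrow> is_l2 H w \<longrightarrow> A (\<lambda>x. v x + w x) = (\<lambda>x. A v x + A w x)) \<and>
     (\<forall>v c. is_l2 H v \<longrightarrow> A (\<lambda>x. c * v x) = (\<lambda>x. c * A v x)) \<and>
     (\<exists>M. \<forall>v. is_l2 H v \<longrightarrow> l2norm (A v) \<le> M * l2norm v) \<and>
     (\<forall>v w. is_l2 H v \<longrightarrow> is_l2 H w \<longrightarrow> l2inner (A v) w = l2inner v (A w)) \<and>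
     (\<exists>c>0. \<forall>v. is_l2 H v \<longrightarrow> l2inner (A v) v \<ge> c * (l2norm v)^2)"

definition pi0 :: "nat \<Rightarrow> ('a \<times> (nat \<Rightarrow> nat) \<Rightarrow> real) \<Rightarrow> 'a \<Rightarrow> real" where
  "pi0 J v g = sqrt (infsum (\<lambda>nu. (v (g, nu))^2) ({1..J} \<rightarrow>\<^sub>E UNIV))"

definition pij :: "nat \<Rightarrow> ('a \<times> (nat \<Rightarrow> nat) \<Rightarrow> real) \<Rightarrow> nat \<Rightarrow> nat \<Rightarrow> real" where
  "pij J v j n = sqrt (infsum (\<lambda>x. (v x)^2) {x \<in> Gset J. snd x j = n})"

definition best_N_err :: "'b set \<Rightarrow> ('b \<Rightarrow> real) \<Rightarrow> nat \<Rightarrow> real" where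
  "best_N_err H v N = Inf {l2norm (\<lambda>x. v x - w x) | w.
       {x. w x \<noteq> 0} \<subseteq> H \<and> finite {x. w x \<noteq> 0} \<and> card {x. w x \<noteq> 0} \<le> N}"

definition in_As :: "'b set \<Rightarrow> real \<Rightarrow> ('b \<Rightarrow> real) \<Rightarrow> bool" where
  "in_As H s v \<longleftrightarrow> is_l2 H v \<and> bdd_above (range (\<lambda>N. (real N + 1) powr s * best_N_err H v N))"

definition As_norm :: "'b set \<Rightarrow> real \<Rightarrow> ('b \<Rightarrow> real) \<Rightarrow> real" where
  "As_norm H s v = (SUP N. (real N + 1) powr s * best_N_err H v N)"

definition prodset :: "nat \<Rightarrow> 'a set \<Rightarrow> (nat \<Rightarrow> nat set) \<Rightarrow> ('a \<times> (nat \<Rightarrow> nat)) set" where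
  "prodset J L0 Ls = L0 \<times> PiE {1..J} Ls"

definition Rset :: "'b set \<Rightarrow> ('b \<Rightarrow> real) \<Rightarrow> 'b \<Rightarrow> real" where
  "Rset L v = (\<lambda>x. if x \<in> L then v x else 0)"

definition cost :: "nat \<Rightarrow> 'a set \<Rightarrow> (nat \<Rightarrow> nat set) \<Rightarrow> 'a set \<Rightarrow> (nat \<Rightarrow> nat set) \<Rightarrow> nat" where
  "cost J L0 Ls M0 Ms = card (M0 - L0) + (\<Sum>j = 1..J. card (Ms j - Ls j))"

definition finite_diff :: "nat \<Rightarrow> 'a set \<Rightarrow> (nat \<Rightarrow> nat set) \<Rightarrow> 'a set \<Rightarrow> (nat \<Rightarrow> nat set) \<Rightarrow> bool" where
  "finite_diff J L0 Ls M0 Ms \<longleftrightarrow> finite (M0 - L0) \<and> (\<forall>j\<in>{1..J}. finite (Ms j - Ls j))"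

end

theory Submission
  imports Defs
begin

definition sqs :: "('b \<Rightarrow> real) \<Rightarrow> bool" where
  "sqs v \<longleftrightarrow> (\<lambda>x. (v x)^2) summable_on UNIV"

lemma is_l2_sqs: "is_l2 H v \<Longrightarrow> sqs v"
  unfolding is_l2_def sqs_def
  by (subst summable_on_cong_neutral[of H UNIV _ "\<lambda>x. (v x)^2"]) auto

lemma sqs_prod: assumes "sqs v" "sqs w" shows "(\<lambda>x. v x * w x) summable_on UNIV"
proof -
  have "(\<lambda>x. (v x)^2 + (w x)^2) summable_on UNIV"
    using assms unfolding sqs_def by (rule summable_on_add)
  hence "(\<lambda>x. norm (v x * w x)) summable_on UNIV"
  proof (rule summable_on_comparison_test)
    fix x
    have "\<bar>v x * w x\<bar> \<le> (v x)^2 + (w x)^2"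
      by (simp add: abs_mult sum_squares_bound) (smt (verit) abs_ge_zero abs_mult_self_eq mult_mono power2_eq_square real_sqrt_abs sum_squares_bound)
    thus "norm (v x * w x) \<le> (v x)^2 + (w x)^2" by simp
  qed simp
  thus ?thesis using summable_on_iff_abs_summable_on_real by blast
qed

lemma sqs_add: assumes "sqs v" "sqs w" shows "sqs (\<lambda>x. v x + w x)"
proof -
  have "(\<lambda>x. (v x)^2 + (w x)^2 + 2 * (v x * w x)) summable_on UNIV"
    using assms sqs_prod[OF assms] unfolding sqs_def
    by (intro summable_on_add summable_on_cmult_right)
  thus ?thesis unfolding sqs_def by (simp add: power2_sum algebra_simps)
qed

lemma sqs_scale: assumes "sqs v" shows "sqs (\<lambda>x. c * v x)"
  using summable_on_cmult_right[of "\<lambda>x. (v x)^2" UNIV "c^2"] assms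
  unfolding sqs_def by (simp add: power_mult_distrib)

lemma sqs_diff: assumes "sqs v" "sqs w" shows "sqs (\<lambda>x. v x - w x)"
  using sqs_add[OF assms(1) sqs_scale[OF assms(2), of "-1"]] by simp

lemma is_l2_add: "is_l2 H v \<Longrightarrow> is_l2 H w \<Longrightarrow> is_l2 H (\<lambda>x. v x + w x)"
  using sqs_add[OF is_l2_sqs is_l2_sqs, of H v H w]
  unfolding is_l2_def sqs_def
  by (auto intro: summable_on_subset)

lemma is_l2_scale: "is_l2 H v \<Longrightarrow> is_l2 H (\<lambda>x. c * v x)"
  using sqs_scale[OF is_l2_sqs, of H v c]
  unfolding is_l2_def sqs_def
  by (auto intro: summable_on_subset)

lemma is_l2_diff: "is_l2 H v \<Longrightarrow> is_l2 H w \<Longrightarrow> is_l2 H (\<lambda>x. v x - w x)"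
  using is_l2_add[OF _ is_l2_scale, of H v w "-1"] by simp

lemma is_l2_zero: "is_l2 H (\<lambda>_. 0)"
  unfolding is_l2_def by simp

lemma l2inner_add: "sqs u \<Longrightarrow> sqs v \<Longrightarrow> sqs w \<Longrightarrow>
   l2inner (\<lambda>x. u x + v x) w = l2inner u w + l2inner v w"
  unfolding l2inner_def
  using infsum_add[OF sqs_prod sqs_prod, of u w v w] by (simp add: distrib_right)

lemma l2inner_scale: "l2inner (\<lambda>x. c * u x) w = c * l2inner u w"
  unfolding l2inner_def
  using infsum_cmult_right'[of c "\<lambda>x. u x * w x" UNIV] by (simp add: mult.assoc)

lemma l2inner_sym: "l2inner u w = l2inner w u"
  unfolding l2inner_def by (simp add: mult.commute)

lemma l2inner_self: "l2inner v v = (l2norm v)^2"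
proof -
  have "0 \<le> infsum (\<lambda>x. (v x)^2) UNIV" by (rule infsum_nonneg) simp
  thus ?thesis unfolding l2inner_def l2norm_def
    by (simp add: power2_eq_square[symmetric])
qed

lemma infsum_sq_nonneg: "0 \<le> infsum (\<lambda>x. (v x :: real)^2) A" by (rule infsum_nonneg) simp

lemma l2norm_nonneg: "l2norm v \<ge> 0" unfolding l2norm_def using infsum_sq_nonneg by simp

lemma l2norm_sq: "(l2norm v)^2 = infsum (\<lambda>x. (v x)^2) UNIV"
  unfolding l2norm_def using infsum_sq_nonneg by simp

lemma l2inner_self_nonneg: "l2inner v v \<ge> 0"
  by (simp add: l2inner_self)

lemma quad_cs:
  fixes a b c :: real
  assumes "\<And>t. 0 \<le> a + 2 * t * b + t^2 * c" "c \<ge> 0"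
  shows "b^2 \<le> a * c"
proof (cases "c = 0")
  case True
  show ?thesis
  proof (rule ccontr)
    assume "\<not> ?thesis"
    hence "b \<noteq> 0" using True by simp
    have "0 \<le> a + 2 * (-(a+1)/(2*b)) * b" using assms(1)[of "-(a+1)/(2*b)"] True by simp
    thus False using \<open>b \<noteq> 0\<close> by (simp add: field_simps)
  qed
next
  case False
  hence c: "c > 0" using assms(2) by simp
  have "0 \<le> a + 2 * (-b/c) * b + (-b/c)^2 * c" by (rule assms(1))
  also have "\<dots> = a - b^2 / c" using c by (simp add: field_simps power2_eq_square)
  finally show ?thesis using c by (simp add: field_simps)
qed

lemma l2inner_lin: "sqs a \<Longrightarrow> sqs b \<Longrightarrow> sqs c \<Longrightarrow>
   l2inner (\<lambda>x. a x + t * b x) c = l2inner a c + t * l2inner b c"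
  using l2inner_add[of a "\<lambda>x. t * b x" c] sqs_scale[of b t] l2inner_scale[of t b c] by simp

lemma l2inner_lin_r: "sqs a \<Longrightarrow> sqs b \<Longrightarrow> sqs c \<Longrightarrow>
   l2inner c (\<lambda>x. a x + t * b x) = l2inner c a + t * l2inner c b"
  using l2inner_lin[of a b c t] l2inner_sym by metis

lemma l2_cs: assumes "sqs v" "sqs w" shows "(l2inner v w)^2 \<le> l2inner v v * l2inner w w"
proof (rule quad_cs)
  fix t
  define p where "p = (\<lambda>x. v x + t * w x)"
  have sp: "sqs p" unfolding p_def using assms by (intro sqs_add sqs_scale)
  have "0 \<le> l2inner p p" by (rule l2inner_self_nonneg)
  also have "l2inner p p = l2inner v p + t * l2inner w p"
    unfolding p_def[of] using l2inner_lin[OF assms sp] by (simp add: p_def)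
  also have "l2inner v p = l2inner v v + t * l2inner v w"
    unfolding p_def using l2inner_lin_r[OF assms assms(1)] .
  also have "l2inner w p = l2inner w v + t * l2inner w w"
    unfolding p_def using l2inner_lin_r[OF assms assms(2)] .
  also have "l2inner w v = l2inner v w" by (rule l2inner_sym)
  finally show "0 \<le> l2inner v v + 2 * t * l2inner v w + t^2 * l2inner w w"
    by (simp add: algebra_simps power2_eq_square)
qed (rule l2inner_self_nonneg)

lemma l2_cs': assumes "sqs v" "sqs w" shows "\<bar>l2inner v w\<bar> \<le> l2norm v * l2norm w"
proof -
  have "(l2inner v w)^2 \<le> (l2norm v * l2norm w)^2"
    using l2_cs[OF assms] by (simp add: l2inner_self power_mult_distrib)
  hence "\<bar>l2inner v w\<bar> \<le> \<bar>l2norm v * l2norm w\<bar>" by (simp add: abs_le_square_iff)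
  thus ?thesis using l2norm_nonneg[of v] l2norm_nonneg[of w] by (simp add: abs_mult)
qed

lemma l2norm_zero: "l2norm (\<lambda>_. 0) = 0" unfolding l2norm_def by simp

lemma l2norm_pos: assumes "sqs v" "v \<noteq> (\<lambda>_. 0)" shows "l2norm v > 0"
proof -
  obtain x0 where x0: "v x0 \<noteq> 0" using assms(2) by auto
  have "infsum (\<lambda>x. (v x)^2) {x0} \<le> infsum (\<lambda>x. (v x)^2) UNIV"
    using assms(1) unfolding sqs_def by (intro infsum_mono_neutral) auto
  hence "(v x0)^2 \<le> (l2norm v)^2" by (simp add: l2norm_sq)
  moreover have "(v x0)^2 > 0" using x0 by simp
  ultimately have "(l2norm v)^2 > 0" by linarith
  thus ?thesis using l2norm_nonneg[of v] by (metis less_eq_real_def power_zero_numeral zero_less_numeral)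
qed

lemma l2norm_scale: assumes "sqs v" shows "l2norm (\<lambda>x. c * v x) = \<bar>c\<bar> * l2norm v"
proof -
  have "(l2norm (\<lambda>x. c * v x))^2 = (\<bar>c\<bar> * l2norm v)^2"
    unfolding l2inner_self[symmetric] power_mult_distrib l2inner_scale
    using l2inner_scale[of c "\<lambda>x. v x" "\<lambda>x. c * v x"] l2inner_sym[of v "\<lambda>x. c * v x"]
      l2inner_scale[of c v v]
    by (simp add: power2_eq_square)
  thus ?thesis using l2norm_nonneg[of "\<lambda>x. c * v x"] l2norm_nonneg[of v]
    by (metis abs_ge_zero mult_nonneg_nonneg power2_eq_iff_nonneg)
qed

lemma l2norm_add: assumes "sqs v" "sqs w" shows "l2norm (\<lambda>x. v x + w x) \<le> l2norm v + l2norm w"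
proof -
  have "(l2norm (\<lambda>x. v x + w x))^2 = l2inner v v + 2 * l2inner v w + l2inner w w"
    using l2inner_lin[OF assms sqs_add[OF assms], of 1] l2inner_lin_r[OF assms assms(1), of 1]
       l2inner_lin_r[OF assms assms(2), of 1] l2inner_sym[of w v]
    by (simp add: l2inner_self[symmetric])
  also have "\<dots> \<le> (l2norm v + l2norm w)^2"
    using l2_cs'[OF assms] by (simp add: l2inner_self power2_sum)
  finally show ?thesis using l2norm_nonneg
    by (meson add_nonneg_nonneg power2_le_imp_le)
qed

lemma l2norm_diff_sym: "l2norm (\<lambda>x. v x - w x) = l2norm (\<lambda>x. w x - v x)"
  unfolding l2norm_def by (simp add: power2_commute)

locale spd =
  fixes H :: "'b set" and A :: "('b \<Rightarrow> real) \<Rightarrow> ('b \<Rightarrow> real)"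
  assumes bspd: "bounded_spd H A" and Hne: "H \<noteq> {}"
begin

lemma Al2: "is_l2 H v \<Longrightarrow> is_l2 H (A v)"
  using bspd unfolding bounded_spd_def by blast

lemma Alin: "is_l2 H x \<Longrightarrow> is_l2 H y \<Longrightarrow> A (\<lambda>i. x i + t * y i) = (\<lambda>i. A x i + t * A y i)"
  using bspd is_l2_scale[of H y t] unfolding bounded_spd_def by auto

lemma Ascale: "is_l2 H x \<Longrightarrow> A (\<lambda>i. t * x i) = (\<lambda>i. t * A x i)"
  using bspd unfolding bounded_spd_def by auto

lemma Adiff: "is_l2 H x \<Longrightarrow> is_l2 H y \<Longrightarrow> A (\<lambda>i. x i - y i) = (\<lambda>i. A x i - A y i)"
  using Alin[of x y "-1"] by simp

lemma Azero: "A (\<lambda>_. 0) = (\<lambda>_. 0)"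
  using Ascale[OF is_l2_zero, of 0] by simp

lemma Asym: "is_l2 H v \<Longrightarrow> is_l2 H w \<Longrightarrow> l2inner (A v) w = l2inner v (A w)"
  using bspd unfolding bounded_spd_def by blast

lemma Acoer: obtains c where "c > 0" "\<And>v. is_l2 H v \<Longrightarrow> l2inner (A v) v \<ge> c * (l2norm v)^2"
proof -
  have "\<exists>c>0. \<forall>v. is_l2 H v \<longrightarrow> l2inner (A v) v \<ge> c * (l2norm v)^2"
    using bspd unfolding bounded_spd_def by blast
  thus ?thesis using that by blast
qed

lemma Abdd: obtains M where "\<And>v. is_l2 H v \<Longrightarrow> l2norm (A v) \<le> M * l2norm v"
proof -
  have "\<exists>M. \<forall>v. is_l2 H v \<longrightarrow> l2norm (A v) \<le> M * l2norm v"
    using bspd unfolding bounded_spd_def by blast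
  thus ?thesis using that by blast
qed

lemma Aform_nonneg: "is_l2 H v \<Longrightarrow> l2inner (A v) v \<ge> 0"
proof -
  assume v: "is_l2 H v"
  obtain c where "c > 0" "\<And>v. is_l2 H v \<Longrightarrow> l2inner (A v) v \<ge> c * (l2norm v)^2" using Acoer by blast
  thus ?thesis using v by (smt (verit) mult_pos_pos zero_le_power2 zero_less_power2 mult_nonneg_nonneg)
qed

lemma Aform_le: "is_l2 H v \<Longrightarrow> l2inner (A v) v \<le> l2norm (A v) * l2norm v"
  using l2_cs'[OF is_l2_sqs[OF Al2] is_l2_sqs] by fastforce

lemma opnorm_bound: assumes v: "is_l2 H v" shows "l2norm (A v) \<le> opnorm H A * l2norm v"
proof (cases "v = (\<lambda>_. 0)")
  case True thus ?thesis by (simp add: Azero l2norm_zero)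
next
  case False
  obtain M where M: "\<And>v. is_l2 H v \<Longrightarrow> l2norm (A v) \<le> M * l2norm v" using Abdd by blast
  have pos: "l2norm v > 0" using l2norm_pos[OF is_l2_sqs[OF v] False] .
  have "bdd_above {l2norm (A v) / l2norm v | v. is_l2 H v \<and> v \<noteq> (\<lambda>_. 0)}"
  proof (rule bdd_aboveI, clarify)
    fix w assume w: "is_l2 H w" "w \<noteq> (\<lambda>_. 0)"
    have "l2norm w > 0" using l2norm_pos[OF is_l2_sqs[OF w(1)] w(2)] .
    thus "l2norm (A w) / l2norm w \<le> M" using M[OF w(1)] by (simp add: divide_le_eq)
  qed
  hence "l2norm (A v) / l2norm v \<le> opnorm H A"
    unfolding opnorm_def using v False by (intro cSup_upper) auto
  thus ?thesis using pos by (simp add: divide_le_eq mult.commute)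
qed

lemma point_l2: assumes "x0 \<in> H" shows "is_l2 H (\<lambda>x. if x = x0 then 1 else 0)"
  and "(\<lambda>x. if x = x0 then 1 else (0::real)) \<noteq> (\<lambda>_. 0)"
proof -
  have "(\<lambda>x. ((\<lambda>x. if x = x0 then 1 else (0::real)) x)^2) summable_on {x0}" by simp
  moreover have "((\<lambda>x. ((\<lambda>x. if x = x0 then 1 else (0::real)) x)^2) summable_on H) \<longleftrightarrow>
     ((\<lambda>x. ((\<lambda>x. if x = x0 then 1 else (0::real)) x)^2) summable_on {x0})"
    by (rule summable_on_cong_neutral) (use assms in auto)
  ultimately have "(\<lambda>x. ((\<lambda>x. if x = x0 then 1 else (0::real)) x)^2) summable_on H" by simp
  thus "is_l2 H (\<lambda>x. if x = x0 then 1 else 0)" unfolding is_l2_def using assms by auto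
  show "(\<lambda>x. if x = x0 then 1 else (0::real)) \<noteq> (\<lambda>_. 0)" by (metis one_neq_zero)
qed

lemma exists_nonzero: obtains v where "is_l2 H v" "v \<noteq> (\<lambda>_. 0)"
  using point_l2 Hne by blast

lemma Alower: obtains c where "c > 0" "\<And>v. is_l2 H v \<Longrightarrow> l2norm (A v) \<ge> c * l2norm v"
proof -
  obtain c where c: "c > 0" "\<And>v. is_l2 H v \<Longrightarrow> l2inner (A v) v \<ge> c * (l2norm v)^2" using Acoer by blast
  have "l2norm (A v) \<ge> c * l2norm v" if v: "is_l2 H v" for v
  proof (cases "l2norm v = 0")
    case True thus ?thesis using l2norm_nonneg by simp
  next
    case False
    hence p: "l2norm v > 0" using l2norm_nonneg[of v] by simp
    have "c * (l2norm v)^2 \<le> l2norm (A v) * l2norm v" using c(2)[OF v] Aform_le[OF v] by linarith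
    thus ?thesis using p by (simp add: power2_eq_square)
  qed
  thus ?thesis using that c(1) by blast
qed

lemma opnorm_pos: "opnorm H A > 0"
proof -
  obtain v where v: "is_l2 H v" "v \<noteq> (\<lambda>_. 0)" using exists_nonzero by blast
  obtain c where c: "c > 0" "\<And>v. is_l2 H v \<Longrightarrow> l2norm (A v) \<ge> c * l2norm v" using Alower by blast
  have "0 < c * l2norm v" using c(1) l2norm_pos[OF is_l2_sqs[OF v(1)] v(2)] by simp
  also have "\<dots> \<le> opnorm H A * l2norm v" using c(2)[OF v(1)] opnorm_bound[OF v(1)] by linarith
  finally show ?thesis using l2norm_nonneg[of v] by (simp add: zero_less_mult_iff)
qed

lemma invnorm_bound: assumes v: "is_l2 H v" shows "l2norm v \<le> invnorm H A * l2norm (A v)"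
  and "invnorm H A > 0"
proof -
  obtain c where c: "c > 0" "\<And>v. is_l2 H v \<Longrightarrow> l2norm (A v) \<ge> c * l2norm v" using Alower by blast
  have bdd: "bdd_above {l2norm v / l2norm (A v) | v. is_l2 H v \<and> v \<noteq> (\<lambda>_. 0)}"
  proof (rule bdd_aboveI, clarify)
    fix w assume w: "is_l2 H w" "w \<noteq> (\<lambda>_. 0)"
    have "l2norm w > 0" using l2norm_pos[OF is_l2_sqs[OF w(1)] w(2)] .
    hence "0 < c * l2norm w" using c(1) by simp
    hence "l2norm (A w) > 0" using c(2)[OF w(1)] by linarith
    thus "l2norm w / l2norm (A w) \<le> 1 / c" using c(2)[OF w(1)] c(1)
      by (simp add: divide_le_eq field_simps)
  qed
  have *: "l2norm w / l2norm (A w) \<le> invnorm H A" if w: "is_l2 H w" "w \<noteq> (\<lambda>_. 0)" for w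
    unfolding invnorm_def using w bdd by (intro cSup_upper) auto
  have pA: "l2norm (A w) > 0" if w: "is_l2 H w" "w \<noteq> (\<lambda>_. 0)" for w
  proof -
    have "l2norm w > 0" using l2norm_pos[OF is_l2_sqs[OF w(1)] w(2)] .
    hence "0 < c * l2norm w" using c(1) by simp
    thus ?thesis using c(2)[OF w(1)] by linarith
  qed
  show "l2norm v \<le> invnorm H A * l2norm (A v)"
  proof (cases "v = (\<lambda>_. 0)")
    case True thus ?thesis by (simp add: Azero l2norm_zero)
  next
    case False
    thus ?thesis using *[OF v False] pA[OF v False] by (simp add: divide_le_eq mult.commute)
  qed
  obtain w where w: "is_l2 H w" "w \<noteq> (\<lambda>_. 0)" using exists_nonzero by blast
  have "0 < l2norm w / l2norm (A w)" using pA[OF w] l2norm_pos[OF is_l2_sqs[OF w(1)] w(2)] by simp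
  thus "invnorm H A > 0" using *[OF w] by linarith
qed

end

context spd begin

definition Aform :: "real \<Rightarrow> ('b \<Rightarrow> real) \<Rightarrow> ('b \<Rightarrow> real) \<Rightarrow> real" where
  "Aform m x y = l2inner (A x) y - m * l2inner x y"

lemma Aform_sym: "is_l2 H x \<Longrightarrow> is_l2 H y \<Longrightarrow> Aform m y x = Aform m x y"
  unfolding Aform_def using Asym[of y x] l2inner_sym by metis

lemma Aform_expand:
  assumes x: "is_l2 H x" and y: "is_l2 H y"
  shows "Aform m (\<lambda>i. x i + t * y i) (\<lambda>i. x i + t * y i) = Aform m x x + 2 * t * Aform m x y + t^2 * Aform m y y"
proof -
  define p where "p = (\<lambda>i. x i + t * y i)"
  have sx: "sqs x" and sy: "sqs y" using x y by (auto intro: is_l2_sqs)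
  have sAx: "sqs (A x)" and sAy: "sqs (A y)" using x y by (auto intro: is_l2_sqs Al2)
  have sp: "sqs p" unfolding p_def using sx sy by (intro sqs_add sqs_scale)
  have Ap: "A p = (\<lambda>i. A x i + t * A y i)" unfolding p_def using Alin[OF x y] .
  have 1: "l2inner (A p) p = l2inner (A x) p + t * l2inner (A y) p"
    unfolding Ap using l2inner_lin[OF sAx sAy sp] .
  have 2: "l2inner (A x) p = l2inner (A x) x + t * l2inner (A x) y"
    unfolding p_def using l2inner_lin_r[OF sx sy sAx] .
  have 3: "l2inner (A y) p = l2inner (A y) x + t * l2inner (A y) y"
    unfolding p_def using l2inner_lin_r[OF sx sy sAy] .
  have 4: "l2inner (A y) x = l2inner (A x) y" using Asym[OF y x] l2inner_sym by metis
  have 5: "l2inner p p = l2inner x p + t * l2inner y p"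
    unfolding p_def[of] using l2inner_lin[OF sx sy sp] by (simp add: p_def)
  have 6: "l2inner x p = l2inner x x + t * l2inner x y"
    unfolding p_def using l2inner_lin_r[OF sx sy sx] .
  have 7: "l2inner y p = l2inner y x + t * l2inner y y"
    unfolding p_def using l2inner_lin_r[OF sx sy sy] .
  have 8: "l2inner y x = l2inner x y" by (rule l2inner_sym)
  show ?thesis unfolding p_def[symmetric] Aform_def 1 2 3 4 5 6 7 8
    by (simp add: algebra_simps power2_eq_square)
qed

lemma Aform_cs:
  assumes pos: "\<And>v. is_l2 H v \<Longrightarrow> Aform m v v \<ge> 0"
    and x: "is_l2 H x" and y: "is_l2 H y"
  shows "(Aform m x y)^2 \<le> Aform m x x * Aform m y y"
proof (rule quad_cs)
  fix t
  show "0 \<le> Aform m x x + 2 * t * Aform m x y + t^2 * Aform m y y"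
    using pos[OF is_l2_add[OF x is_l2_scale[OF y, of t]]] Aform_expand[OF x y, of m t] by simp
qed (rule pos[OF y])

definition mray :: real where
  "mray = Inf {l2inner (A v) v / (l2norm v)^2 | v. is_l2 H v \<and> v \<noteq> (\<lambda>_. 0)}"

lemma mray_props: "mray \<ge> 0" "\<And>v. is_l2 H v \<Longrightarrow> l2inner (A v) v \<ge> mray * (l2norm v)^2"
proof -
  let ?R = "{l2inner (A v) v / (l2norm v)^2 | v. is_l2 H v \<and> v \<noteq> (\<lambda>_. 0)}"
  have ne: "?R \<noteq> {}" using exists_nonzero by blast
  have ge0: "\<And>r. r \<in> ?R \<Longrightarrow> 0 \<le> r" using Aform_nonneg by auto
  hence bdd: "bdd_below ?R" by (meson bdd_below.I)
  show "mray \<ge> 0" unfolding mray_def using ne ge0 by (intro cInf_greatest) auto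
  fix v assume v: "is_l2 H v"
  show "l2inner (A v) v \<ge> mray * (l2norm v)^2"
  proof (cases "v = (\<lambda>_. 0)")
    case True thus ?thesis using Aform_nonneg[OF v] by (simp add: l2norm_zero)
  next
    case False
    hence p: "l2norm v > 0" using l2norm_pos[OF is_l2_sqs[OF v]] by simp
    have "mray \<le> l2inner (A v) v / (l2norm v)^2" unfolding mray_def
      using v False bdd by (intro cInf_lower) auto
    thus ?thesis using p by (simp add: le_divide_eq)
  qed
qed

lemma mray_ge: "mray \<ge> 1 / invnorm H A"
proof (rule ccontr)
  assume neg: "\<not> ?thesis"
  define \<mu> where "\<mu> = 1 / invnorm H A"
  have lt: "mray < \<mu>" using neg \<mu>_def by simp
  define K where "K = opnorm H A"
  have Kpos: "K > 0" unfolding K_def by (rule opnorm_pos)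
  define \<eta> where "\<eta> = ((\<mu> - mray)/2)^2 / K"
  have etapos: "\<eta> > 0" unfolding \<eta>_def using lt Kpos by simp
  let ?R = "{l2inner (A v) v / (l2norm v)^2 | v. is_l2 H v \<and> v \<noteq> (\<lambda>_. 0)}"
  have ne: "?R \<noteq> {}" using exists_nonzero by blast
  have "Inf ?R < mray + \<eta>" using etapos unfolding mray_def by simp
  then obtain r where "r \<in> ?R" "r < mray + \<eta>" using cInf_lessD[OF ne] by blast
  then obtain v where v: "is_l2 H v" "v \<noteq> (\<lambda>_. 0)" and rv: "l2inner (A v) v / (l2norm v)^2 < mray + \<eta>"
    by blast
  have vp: "l2norm v > 0" using l2norm_pos[OF is_l2_sqs[OF v(1)] v(2)] .
  have 1: "l2inner (A v) v < (mray + \<eta>) * (l2norm v)^2" using rv vp by (simp add: divide_less_eq)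
  define y where "y = (\<lambda>i. A v i + (- mray) * v i)"
  have y: "is_l2 H y" unfolding y_def using v(1) Al2 by (intro is_l2_add is_l2_scale)
  have pos: "\<And>w. is_l2 H w \<Longrightarrow> Aform mray w w \<ge> 0"
    using mray_props(2) unfolding Aform_def by (simp add: l2inner_self)
  have cs: "(Aform mray v y)^2 \<le> Aform mray v v * Aform mray y y" by (rule Aform_cs[OF pos v(1) y])
  have a1: "Aform mray v v < \<eta> * (l2norm v)^2" using 1 unfolding Aform_def by (simp add: l2inner_self algebra_simps)
  have a2: "Aform mray v y = (l2norm y)^2"
  proof -
    have "l2inner y y = l2inner (A v) y + (- mray) * l2inner v y"
      unfolding y_def[of] using l2inner_lin[OF is_l2_sqs[OF Al2[OF v(1)]] is_l2_sqs[OF v(1)] is_l2_sqs[OF y], of "- mray"]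
      by (simp add: y_def)
    thus ?thesis unfolding Aform_def by (simp add: l2inner_self)
  qed
  have a3: "Aform mray y y \<le> K * (l2norm y)^2"
  proof -
    have "l2inner (A y) y \<le> l2norm (A y) * l2norm y" by (rule Aform_le[OF y])
    also have "\<dots> \<le> K * l2norm y * l2norm y" unfolding K_def
      using opnorm_bound[OF y] l2norm_nonneg[of y] by (simp add: mult_right_mono)
    finally have c: "l2inner (A y) y \<le> K * (l2norm y)^2" by (simp add: power2_eq_square mult.assoc)
    have "mray * l2inner y y \<ge> 0" using mray_props(1) l2inner_self_nonneg[of y] by simp
    thus ?thesis unfolding Aform_def using c by linarith
  qed
  have ny: "(l2norm y)^2 \<le> \<eta> * K * (l2norm v)^2"
  proof (cases "l2norm y = 0")
    case True thus ?thesis using etapos Kpos by simp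
  next
    case False
    hence yp: "(l2norm y)^2 > 0" using l2norm_nonneg[of y] by simp
    have "((l2norm y)^2)^2 \<le> Aform mray v v * Aform mray y y" using cs a2 by simp
    also have "\<dots> \<le> (\<eta> * (l2norm v)^2) * (K * (l2norm y)^2)"
      using a1 a3 pos[OF v(1)] pos[OF y] by (intro mult_mono) auto
    finally have "(l2norm y)^2 * (l2norm y)^2 \<le> (\<eta> * K * (l2norm v)^2) * (l2norm y)^2"
      by (simp add: power2_eq_square algebra_simps)
    thus ?thesis using yp by (rule mult_right_le_imp_le)
  qed
  also have "\<eta> * K * (l2norm v)^2 = ((\<mu> - mray)/2 * l2norm v)^2"
  proof -
    have "\<eta> * K = ((\<mu> - mray)/2)^2" unfolding \<eta>_def using Kpos by simp
    thus ?thesis by (simp only: power_mult_distrib)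
  qed
  finally have yy: "(l2norm y)^2 \<le> ((\<mu> - mray)/2 * l2norm v)^2" .
  have "0 \<le> (\<mu> - mray)/2 * l2norm v" using lt l2norm_nonneg[of v] by simp
  hence "l2norm y \<le> (\<mu> - mray)/2 * l2norm v" using power2_le_imp_le[OF yy] by blast
  moreover have "l2norm (A v) \<le> l2norm y + mray * l2norm v"
  proof -
    have "A v = (\<lambda>i. y i + mray * v i)" unfolding y_def by auto
    hence "l2norm (A v) \<le> l2norm y + l2norm (\<lambda>i. mray * v i)"
      using l2norm_add[OF is_l2_sqs[OF y] sqs_scale[OF is_l2_sqs[OF v(1)]]] by simp
    thus ?thesis using l2norm_scale[OF is_l2_sqs[OF v(1)], of mray] mray_props(1) by simp
  qed
  moreover have "\<mu> * l2norm v \<le> l2norm (A v)"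
    using invnorm_bound[OF v(1)] unfolding \<mu>_def by (simp add: divide_le_eq mult.commute)
  ultimately have "\<mu> * l2norm v \<le> (\<mu> + mray)/2 * l2norm v" by (simp add: algebra_simps)
  thus False using vp lt by (simp add: mult_le_cancel_right)
qed

lemma key_lower: assumes z: "is_l2 H z" shows "(l2norm z)^2 \<le> invnorm H A * l2inner (A z) z"
proof -
  have ip: "invnorm H A > 0" using invnorm_bound(2)[OF z] .
  have "(l2norm z)^2 = invnorm H A * ((1 / invnorm H A) * (l2norm z)^2)" using ip by simp
  also have "\<dots> \<le> invnorm H A * (mray * (l2norm z)^2)"
    using mray_ge ip by (intro mult_left_mono mult_right_mono) auto
  also have "\<dots> \<le> invnorm H A * l2inner (A z) z"
    using mray_props(2)[OF z] ip by (intro mult_left_mono) auto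
  finally show ?thesis .
qed

lemma Aform_upper: assumes "is_l2 H v" shows "l2inner (A v) v \<le> opnorm H A * (l2norm v)^2"
proof -
  have "l2inner (A v) v \<le> l2norm (A v) * l2norm v" by (rule Aform_le[OF assms])
  also have "\<dots> \<le> opnorm H A * l2norm v * l2norm v"
    using opnorm_bound[OF assms] l2norm_nonneg[of v] by (simp add: mult_right_mono)
  finally show ?thesis by (simp add: power2_eq_square mult.assoc)
qed

lemma energy_lower: assumes e: "is_l2 H e" shows "(l2norm (A e))^2 \<le> opnorm H A * l2inner (A e) e"
proof -
  have pos: "\<And>v. is_l2 H v \<Longrightarrow> Aform 0 v v \<ge> 0" unfolding Aform_def using Aform_nonneg by simp
  have Ae: "is_l2 H (A e)" by (rule Al2[OF e])
  have cs: "(Aform 0 e (A e))^2 \<le> Aform 0 e e * Aform 0 (A e) (A e)" by (rule Aform_cs[OF pos e Ae])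
  have 1: "Aform 0 e (A e) = (l2norm (A e))^2" unfolding Aform_def by (simp add: l2inner_self)
  have 2: "Aform 0 (A e) (A e) \<le> opnorm H A * (l2norm (A e))^2" unfolding Aform_def
    using Aform_upper[OF Ae] by simp
  show ?thesis
  proof (cases "l2norm (A e) = 0")
    case True thus ?thesis using Aform_nonneg[OF e] opnorm_pos by simp
  next
    case False
    hence p: "(l2norm (A e))^2 > 0" using l2norm_nonneg[of "A e"] by simp
    have "(l2norm (A e))^2 * (l2norm (A e))^2 \<le> l2inner (A e) e * (opnorm H A * (l2norm (A e))^2)"
      using cs 1 2 Aform_nonneg[OF e] unfolding Aform_def
      by (simp add: power2_eq_square[of "(l2norm (A e))^2"]) (smt (verit) mult_left_mono)
    hence "(l2norm (A e))^2 * (l2norm (A e))^2 \<le> (opnorm H A * l2inner (A e) e) * (l2norm (A e))^2"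
      by (simp add: mult_ac)
    thus ?thesis using p by (rule mult_right_le_imp_le)
  qed
qed

end

lemma finite_support_sqs: assumes "finite {x. w x \<noteq> 0}" shows "sqs w"
proof -
  have "(\<lambda>x. (w x)^2) summable_on {x. w x \<noteq> 0}" using assms by simp
  moreover have "((\<lambda>x. (w x)^2) summable_on UNIV) \<longleftrightarrow> ((\<lambda>x. (w x)^2) summable_on {x. w x \<noteq> 0})"
    by (rule summable_on_cong_neutral) auto
  ultimately show ?thesis unfolding sqs_def by simp
qed

lemma err_nonneg: "best_N_err H p N \<ge> 0"
proof -
  let ?S = "{l2norm (\<lambda>x. p x - w x) | w.
       {x. w x \<noteq> 0} \<subseteq> H \<and> finite {x. w x \<noteq> 0} \<and> card {x. w x \<noteq> 0} \<le> N}"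
  have "l2norm (\<lambda>x. p x - (\<lambda>_. 0) x) \<in> ?S"
    by (rule CollectI, rule exI[of _ "\<lambda>_. 0"]) simp
  hence ne: "?S \<noteq> {}" by blast
  show ?thesis unfolding best_N_err_def
  proof (rule cInf_greatest[OF ne])
    fix r assume "r \<in> ?S"
    then obtain w where "r = l2norm (\<lambda>x. p x - w x)" by blast
    thus "0 \<le> r" using l2norm_nonneg by simp
  qed
qed

lemma approx_exists:
  fixes p :: "'c \<Rightarrow> real"
  assumes inA: "in_As UNIV s p" and s: "s > 0" and d: "\<delta> > 0"
  shows "\<exists>T. finite T \<and> real (card T) \<le> (As_norm UNIV s p / \<delta>) powr (1/s)
            \<and> infsum (\<lambda>g. (p g)^2) (-T) \<le> \<delta>^2"
proof -
  define a where "a = As_norm UNIV s p"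
  have bdd: "bdd_above (range (\<lambda>N. (real N + 1) powr s * best_N_err UNIV p N))"
    using inA unfolding in_As_def by simp
  have le_a: "(real N + 1) powr s * best_N_err UNIV p N \<le> a" for N
    unfolding a_def As_norm_def using bdd by (intro cSUP_upper) auto
  have a0: "a \<ge> 0" using le_a[of 0] err_nonneg[of UNIV p 0] by simp
  define x where "x = (a / \<delta>) powr (1/s)"
  have x0: "x \<ge> 0" unfolding x_def by simp
  define N where "N = nat \<lfloor>x\<rfloor>"
  have Nx: "real N \<le> x" unfolding N_def using x0 by linarith
  have Nx2: "x < real N + 1" unfolding N_def using x0 by linarith
  have errd: "best_N_err UNIV p N < \<delta>"
  proof (cases "a = 0")
    case True
    have "(real N + 1) powr s > 0" by simp
    hence "best_N_err UNIV p N \<le> 0" using le_a[of N] True by (simp add: mult_le_0_iff)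
    thus ?thesis using d by simp
  next
    case False
    hence ap: "a > 0" using a0 by simp
    have e: "x powr s = a / \<delta>" unfolding x_def using ap d s by (simp add: powr_powr)
    have "x powr s < (real N + 1) powr s" using Nx2 x0 s by (intro powr_less_mono2) auto
    hence 1: "a / \<delta> < (real N + 1) powr s" using e by simp
    have "best_N_err UNIV p N \<le> a / (real N + 1) powr s" using le_a[of N]
      by (simp add: le_divide_eq mult.commute)
    also have "\<dots> < \<delta>" using 1 d ap by (simp add: divide_less_eq mult.commute)
    finally show ?thesis .
  qed
  have ne: "{l2norm (\<lambda>x. p x - w x) | w.
       {x. w x \<noteq> 0} \<subseteq> UNIV \<and> finite {x. w x \<noteq> 0} \<and> card {x. w x \<noteq> 0} \<le> N} \<noteq> {}"
  proof -
    have "l2norm (\<lambda>x. p x - (\<lambda>_. 0) x) \<in> {l2norm (\<lambda>x. p x - w x) | w.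
       {x. w x \<noteq> 0} \<subseteq> UNIV \<and> finite {x. w x \<noteq> 0} \<and> card {x. w x \<noteq> 0} \<le> N}"
      by (rule CollectI, rule exI[of _ "\<lambda>_. 0"]) simp
    thus ?thesis by blast
  qed
  obtain r where "r \<in> {l2norm (\<lambda>x. p x - w x) | w.
       {x. w x \<noteq> 0} \<subseteq> UNIV \<and> finite {x. w x \<noteq> 0} \<and> card {x. w x \<noteq> 0} \<le> N}" "r < \<delta>"
    using cInf_lessD[OF ne] errd unfolding best_N_err_def by blast
  then obtain w where w: "finite {x. w x \<noteq> 0}" "card {x. w x \<noteq> 0} \<le> N" "l2norm (\<lambda>x. p x - w x) < \<delta>"
    by blast
  define T where "T = {x. w x \<noteq> 0}"
  have sp: "sqs p" using inA unfolding in_As_def by (auto intro: is_l2_sqs)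
  have sw: "sqs w" using w(1) by (rule finite_support_sqs)
  have sd: "sqs (\<lambda>x. p x - w x)" using sp sw by (rule sqs_diff)
  have "infsum (\<lambda>g. (p g)^2) (-T) = infsum (\<lambda>g. (p g - w g)^2) (-T)"
    unfolding T_def by (intro infsum_cong) auto
  also have "\<dots> \<le> infsum (\<lambda>g. (p g - w g)^2) UNIV"
  proof -
    have s0: "(\<lambda>g. (p g - w g)^2) summable_on UNIV" using sd unfolding sqs_def .
    have s1: "(\<lambda>g. (p g - w g)^2) summable_on (-T)" using s0 by (rule summable_on_subset) simp
    show ?thesis by (rule infsum_mono_neutral[OF s1 s0]) auto
  qed
  also have "\<dots> = (l2norm (\<lambda>x. p x - w x))^2" by (simp add: l2norm_sq)
  also have "\<dots> \<le> \<delta>^2" using w(3) l2norm_nonneg by (intro power_mono) auto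
  finally have 2: "infsum (\<lambda>g. (p g)^2) (-T) \<le> \<delta>^2" .
  have "real (card T) \<le> (As_norm UNIV s p / \<delta>) powr (1/s)"
    using w(2) Nx unfolding T_def x_def a_def by linarith
  thus ?thesis using 2 w(1) unfolding T_def by blast
qed

lemma infsum_finsum:
  fixes f :: "'i \<Rightarrow> 'x \<Rightarrow> real"
  assumes "finite I" "\<And>i. i \<in> I \<Longrightarrow> f i summable_on A"
  shows "(\<lambda>x. \<Sum>i\<in>I. f i x) summable_on A \<and> infsum (\<lambda>x. \<Sum>i\<in>I. f i x) A = (\<Sum>i\<in>I. infsum (f i) A)"
  using assms
proof (induction I rule: finite_induct)
  case empty thus ?case by simp
next
  case (insert i I)
  have s1: "f i summable_on A" using insert by simp
  have s2: "(\<lambda>x. \<Sum>i\<in>I. f i x) summable_on A" using insert by simp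
  show ?case using insert summable_on_add[OF s1 s2] infsum_add[OF s1 s2] by simp
qed

lemma tail_bound:
  fixes u :: "'a \<times> (nat \<Rightarrow> nat) \<Rightarrow> real"
  assumes u: "is_l2 (Gset J) u"
   and T0: "infsum (\<lambda>g. (pi0 J u g)^2) (-T0) \<le> \<delta>^2"
   and Tj: "\<forall>j\<in>{1..J}. infsum (\<lambda>n. (pij J u j n)^2) (-T j) \<le> \<delta>^2"
   and M0: "T0 \<subseteq> M0" and M: "\<forall>j\<in>{1..J}. T j \<subseteq> M j"
  shows "(l2norm (\<lambda>x. u x - Rset (prodset J M0 M) u x))^2 \<le> (real J + 1) * \<delta>^2"
proof -
  define U where "U = (\<lambda>x. (u x)^2)"
  define P where "P = PiE {1..J} (\<lambda>_::nat. UNIV :: nat set)"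
  have UU: "U summable_on UNIV" using is_l2_sqs[OF u] unfolding U_def sqs_def .
  have Usub: "U summable_on S" for S using UU by (rule summable_on_subset) simp
  have U0: "x \<notin> Gset J \<Longrightarrow> U x = 0" for x using u unfolding is_l2_def U_def by (cases x) auto
  have Unn: "U x \<ge> 0" for x unfolding U_def by simp
  define S0 where "S0 = {x \<in> Gset J. fst x \<notin> T0}"
  define S where "S = (\<lambda>j. {x \<in> (Gset J :: ('a \<times> (nat \<Rightarrow> nat)) set). snd x j \<notin> T j})"
  have A: "infsum U S0 = infsum (\<lambda>g. (pi0 J u g)^2) (-T0)"
  proof -
    have S0eq: "S0 = Sigma (-T0) (\<lambda>_. P)" unfolding S0_def P_def Gset_def by auto
    have "infsum (\<lambda>g. infsum (\<lambda>nu. U (g,nu)) P) (-T0) = infsum U (Sigma (-T0) (\<lambda>_. P))"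
      using Usub by (intro infsum_Sigma_banach)
    moreover have "(pi0 J u g)^2 = infsum (\<lambda>nu. U (g,nu)) P" for g
      unfolding pi0_def U_def P_def using infsum_sq_nonneg[of "\<lambda>nu. u (g, nu)"] by simp
    ultimately show ?thesis using S0eq by simp
  qed
  have B: "infsum U (S j) = infsum (\<lambda>n. (pij J u j n)^2) (-T j)" for j
  proof -
    define B where "B = (\<lambda>n. {x \<in> (Gset J :: ('a \<times> (nat \<Rightarrow> nat)) set). snd x j = n})"
    have inj: "inj_on snd (Sigma (-T j) B)" unfolding B_def by (auto simp: inj_on_def)
    have img: "snd ` Sigma (-T j) B = S j" unfolding B_def S_def by force
    have sm: "(\<lambda>(n, x). U x) summable_on Sigma (-T j) B"
    proof -
      have "(U \<circ> snd) summable_on Sigma (-T j) B"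
        using summable_on_reindex[OF inj, of U] img Usub by simp
      moreover have "(\<lambda>(n::nat, x). U x) = U \<circ> snd" by (auto simp: fun_eq_iff)
      ultimately show ?thesis by simp
    qed
    have "infsum (\<lambda>n. infsum (\<lambda>x. U x) (B n)) (-T j) = infsum (\<lambda>(n,x). U x) (Sigma (-T j) B)"
      using sm by (rule infsum_Sigma'_banach)
    also have "\<dots> = infsum (U \<circ> snd) (Sigma (-T j) B)"
      by (rule arg_cong[where f="\<lambda>h. infsum h (Sigma (-T j) B)"]) (auto simp: fun_eq_iff)
    also have "\<dots> = infsum U (S j)" using infsum_reindex[OF inj, of U] img by simp
    finally have 1: "infsum (\<lambda>n. infsum U (B n)) (-T j) = infsum U (S j)" by simp
    have "(pij J u j n)^2 = infsum U (B n)" for n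
      unfolding pij_def U_def B_def using infsum_sq_nonneg[of u] by simp
    thus ?thesis using 1 by simp
  qed
  define F where "F = (\<lambda>x. (if x \<in> S0 then U x else 0) + (\<Sum>j\<in>{1..J}. if x \<in> S j then U x else 0))"
  have ind: "(\<lambda>x. if x \<in> X then U x else 0) summable_on UNIV \<and> infsum (\<lambda>x. if x \<in> X then U x else 0) UNIV = infsum U X" for X
  proof -
    have "((\<lambda>x. if x \<in> X then U x else 0) summable_on UNIV) = (U summable_on X)"
      by (rule summable_on_cong_neutral) auto
    moreover have "infsum (\<lambda>x. if x \<in> X then U x else 0) UNIV = infsum U X"
      by (rule infsum_cong_neutral) auto
    ultimately show ?thesis using Usub by simp
  qed
  have fs: "(\<lambda>x. \<Sum>j\<in>{1..J}. if x \<in> S j then U x else 0) summable_on UNIV \<and>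
      infsum (\<lambda>x. \<Sum>j\<in>{1..J}. if x \<in> S j then U x else 0) UNIV = (\<Sum>j\<in>{1..J}. infsum U (S j))"
  proof -
    have "\<And>j. j \<in> {1..J} \<Longrightarrow> (\<lambda>x. if x \<in> S j then U x else 0) summable_on UNIV"
      using ind by blast
    moreover have "(\<Sum>j\<in>{1..J}. infsum (\<lambda>x. if x \<in> S j then U x else 0) UNIV) = (\<Sum>j\<in>{1..J}. infsum U (S j))"
      using ind by (intro sum.cong) auto
    ultimately show ?thesis
      using infsum_finsum[of "{1..J}" "\<lambda>j x. if x \<in> S j then U x else 0" UNIV] by simp
  qed
  have Fs: "F summable_on UNIV" unfolding F_def
    by (rule summable_on_add[OF conjunct1[OF ind[of S0]] conjunct1[OF fs]])
  have Finf: "infsum F UNIV = infsum U S0 + (\<Sum>j\<in>{1..J}. infsum U (S j))"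
    unfolding F_def infsum_add[OF conjunct1[OF ind[of S0]] conjunct1[OF fs]]
    using conjunct2[OF ind[of S0]] conjunct2[OF fs] by simp
  define L where "L = (\<lambda>x. (u x - Rset (prodset J M0 M) u x)^2)"
  have sR: "sqs (Rset (prodset J M0 M) u)" unfolding sqs_def
  proof (rule summable_on_comparison_test[OF UU])
    fix x show "(Rset (prodset J M0 M) u x)^2 \<le> U x" unfolding Rset_def U_def by simp
  qed simp
  have Ls: "L summable_on UNIV" unfolding L_def
    using sqs_diff[OF is_l2_sqs[OF u] sR] unfolding sqs_def .
  have LF: "L x \<le> F x" for x
  proof -
    have sumnn: "0 \<le> (\<Sum>j\<in>{1..J}. if x \<in> S j then U x else 0)" using Unn by (intro sum_nonneg) auto
    show ?thesis
    proof (cases "x \<in> prodset J M0 M")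
      case True thus ?thesis unfolding L_def F_def Rset_def using sumnn Unn by simp
    next
      case notin: False
      hence Lx: "L x = U x" unfolding L_def Rset_def U_def by simp
      show ?thesis
      proof (cases "x \<in> Gset J")
        case False thus ?thesis using Lx U0 F_def sumnn Unn by simp
      next
        case G: True
        obtain g nu where x: "x = (g, nu)" by fastforce
        have nuP: "nu \<in> PiE {1..J} (\<lambda>_. UNIV)" using G x unfolding Gset_def by auto
        have "g \<notin> M0 \<or> (\<exists>j\<in>{1..J}. nu j \<notin> M j)"
          using notin nuP x unfolding prodset_def by (auto simp: PiE_iff)
        thus ?thesis
        proof
          assume "g \<notin> M0"
          hence "x \<in> S0" using M0 G x unfolding S0_def by auto
          thus ?thesis using Lx sumnn unfolding F_def by simp
        next
          assume "\<exists>j\<in>{1..J}. nu j \<notin> M j"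
          then obtain j where j: "j \<in> {1..J}" "nu j \<notin> M j" by blast
          hence xs: "x \<in> S j" using M G x unfolding S_def by auto
          have "U x = (if x \<in> S j then U x else 0)" using xs by simp
          also have "\<dots> \<le> (\<Sum>j\<in>{1..J}. if x \<in> S j then U x else 0)"
            using j(1) Unn by (intro member_le_sum) auto
          finally have "U x \<le> (\<Sum>j\<in>{1..J}. if x \<in> S j then U x else 0)" .
          moreover have "0 \<le> (if x \<in> S0 then U x else 0)" using Unn by simp
          ultimately show ?thesis using Lx unfolding F_def by linarith
        qed
      qed
    qed
  qed
  have "(l2norm (\<lambda>x. u x - Rset (prodset J M0 M) u x))^2 = infsum L UNIV"
    unfolding L_def by (rule l2norm_sq)
  also have "\<dots> \<le> infsum F UNIV" using Ls Fs LF by (rule infsum_mono)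
  also have "\<dots> = infsum U S0 + (\<Sum>j\<in>{1..J}. infsum U (S j))" by (rule Finf)
  also have "\<dots> \<le> \<delta>^2 + (\<Sum>j\<in>{1..J}. \<delta>^2)"
  proof (rule add_mono)
    show "infsum U S0 \<le> \<delta>^2" using A T0 by simp
    show "(\<Sum>j\<in>{1..J}. infsum U (S j)) \<le> (\<Sum>j\<in>{1..J}. \<delta>^2)"
    proof (rule sum_mono)
      fix j assume "j \<in> {1..J}"
      thus "infsum U (S j) \<le> \<delta>^2" using B[of j] Tj by simp
    qed
  qed
  also have "\<dots> = (real J + 1) * \<delta>^2" by (simp add: algebra_simps)
  finally show ?thesis .
qed

lemma is_l2_Rset: assumes "is_l2 H u" shows "is_l2 H (Rset X u)"
proof -
  have "(\<lambda>x. (u x)^2) summable_on H" using assms unfolding is_l2_def by simp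
  hence "(\<lambda>x. (Rset X u x)^2) summable_on H"
    by (rule summable_on_comparison_test) (auto simp: Rset_def)
  thus ?thesis using assms unfolding is_l2_def Rset_def by auto
qed

context spd begin

lemma bulk:
  assumes u: "is_l2 H u" and w: "is_l2 H w" and v: "is_l2 H v"
    and wL: "\<forall>x. x \<notin> L \<longrightarrow> w x = 0" and vL: "\<forall>x. x \<notin> L \<longrightarrow> v x = 0"
    and approx: "opnorm H A * (l2norm (\<lambda>x. u x - v x))^2 \<le> lam^2 * (l2norm (\<lambda>x. A w x - A u x))^2"
  shows "(l2norm (\<lambda>x. A w x - A u x))^2 * (1 - opnorm H A * lam^2)
     \<le> cond_number H A * (l2norm (Rset L (\<lambda>x. A w x - A u x)))^2"
proof -
  define r where "r = (\<lambda>x. A w x - A u x)"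
  define R where "R = l2norm r"
  define N where "N = l2norm (Rset L r)"
  define K where "K = opnorm H A"
  define I where "I = invnorm H A"
  have Kp: "K > 0" unfolding K_def by (rule opnorm_pos)
  have Ip: "I > 0" unfolding I_def using invnorm_bound(2)[OF u] .
  define e where "e = (\<lambda>x. w x - u x)"
  define z where "z = (\<lambda>x. w x - v x)"
  have e: "is_l2 H e" unfolding e_def using w u by (rule is_l2_diff)
  have z: "is_l2 H z" unfolding z_def using w v by (rule is_l2_diff)
  have Ae: "A e = r" unfolding e_def r_def using Adiff[OF w u] .
  define a where "a = l2inner (A e) e"
  define b where "b = l2inner (A e) z"
  define c where "c = l2inner (A z) z"
  define d where "d = l2inner (A (\<lambda>x. v x - u x)) (\<lambda>x. v x - u x)"
  have vu: "is_l2 H (\<lambda>x. v x - u x)" using v u by (rule is_l2_diff)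
  have 1: "R^2 \<le> K * a" unfolding R_def K_def a_def using energy_lower[OF e] Ae by simp
  have 2: "d \<le> K * (l2norm (\<lambda>x. u x - v x))^2" unfolding d_def K_def
    using Aform_upper[OF vu] l2norm_diff_sym[of v u] by simp
  have ez: "(\<lambda>i. e i + (-1) * z i) = (\<lambda>x. v x - u x)" unfolding e_def z_def by auto
  have 3: "d = a - 2 * b + c"
    using Aform_expand[OF e z, of 0 "-1"] unfolding ez Aform_def a_def b_def c_def d_def by simp
  have bR: "b = l2inner (Rset L r) z"
  proof -
    have "b = l2inner r z" unfolding b_def Ae ..
    also have "\<dots> = l2inner (Rset L r) z" unfolding l2inner_def
      by (rule infsum_cong) (use wL vL in \<open>auto simp: Rset_def z_def\<close>)
    finally show ?thesis .
  qed
  have sRr: "sqs (Rset L r)" using is_l2_sqs[OF is_l2_Rset[OF Al2[OF e]]] Ae by simp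
  have 4: "b^2 \<le> N^2 * (l2norm z)^2"
  proof -
    have "\<bar>b\<bar> \<le> N * l2norm z" unfolding bR N_def using l2_cs'[OF sRr is_l2_sqs[OF z]] .
    hence "\<bar>b\<bar>^2 \<le> (N * l2norm z)^2" by (rule power_mono) simp
    thus ?thesis by (simp add: power_mult_distrib)
  qed
  have 5: "(l2norm z)^2 \<le> I * c" unfolding I_def c_def by (rule key_lower[OF z])
  have Nn: "N^2 \<ge> 0" by simp
  have 6: "a \<le> d + I * N^2"
  proof (cases "c = 0")
    case True
    hence "(l2norm z)^2 \<le> 0" using 5 by simp
    hence "(l2norm z)^2 = 0" by (simp add: le_antisym)
    hence "b^2 \<le> 0" using 4 by simp
    hence "b = 0" by simp
    thus ?thesis using 3 True Ip by simp
  next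
    case False
    have c0: "c \<ge> 0" unfolding c_def by (rule Aform_nonneg[OF z])
    hence cp: "c > 0" using False by simp
    have "N^2 * (l2norm z)^2 \<le> N^2 * (I * c)" using mult_left_mono[OF 5 Nn] .
    hence "b^2 \<le> (I * N^2) * c" using 4 by (simp add: mult_ac)
    hence "b^2 / c \<le> I * N^2" using cp by (simp add: divide_le_eq)
    moreover have "2 * b - c \<le> b^2 / c"
    proof -
      have "0 \<le> (b - c)^2" by simp
      hence "2 * b * c - c * c \<le> b^2" by (simp add: power2_eq_square algebra_simps)
      thus ?thesis using cp by (simp add: le_divide_eq algebra_simps power2_eq_square)
    qed
    ultimately show ?thesis using 3 by linarith
  qed
  have 7: "K * (l2norm (\<lambda>x. u x - v x))^2 \<le> lam^2 * R^2"
    using approx unfolding K_def R_def r_def .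
  have "K * a \<le> K * (d + I * N^2)" using mult_left_mono[OF 6] Kp by simp
  hence "R^2 \<le> K * (d + I * N^2)" using 1 by linarith
  also have "\<dots> = K * d + K * I * N^2" by (simp add: algebra_simps)
  also have "\<dots> \<le> K * (lam^2 * R^2) + K * I * N^2"
  proof -
    have "d \<le> lam^2 * R^2" using 2 7 by linarith
    thus ?thesis using Kp by simp
  qed
  finally have "R^2 * (1 - K * lam^2) \<le> K * I * N^2" by (simp add: algebra_simps)
  thus ?thesis unfolding R_def N_def r_def K_def I_def cond_number_def .
qed

end

lemma pw_split:
  fixes a C R s :: real
  assumes "R > 0" "C > 0"
  shows "(a / (R / C)) powr (1/s) = C powr (1/s) * R powr (- 1 / s) * a powr (1/s)"
proof -
  have "a / (R / C) = (C * a) / R" using assms by simp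
  hence "(a / (R / C)) powr (1/s) = C powr (1/s) * a powr (1/s) / R powr (1/s)"
    by (simp add: powr_divide powr_mult)
  also have "R powr (- 1 / s) = 1 / R powr (1/s)"
    using powr_minus_divide[of R "1/s"] by simp
  ultimately show ?thesis by simp
qed

lemma alg_aux: fixes K j lam R :: real
  shows "K > 0 \<Longrightarrow> j > 0 \<Longrightarrow> lam > 0 \<Longrightarrow> K * j * R^2 / (j^2 * K / lam^2) = lam^2 * R^2 / j"
  by (simp add: field_simps power2_eq_square)

theorem theorem4p5:
  fixes J :: nat
    and A :: "('a \<times> (nat \<Rightarrow> nat) \<Rightarrow> real) \<Rightarrow> ('a \<times> (nat \<Rightarrow> nat) \<Rightarrow> real)"
    and f u w :: "'a \<times> (nat \<Rightarrow> nat) \<Rightarrow> real"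
    and \<alpha> lam s1 s2 :: real
    and L0 Ls0 :: "'a set" and L Ls :: "nat \<Rightarrow> nat set"
  assumes J: "J \<ge> 1"
    and A: "bounded_spd (Gset J) A"
    and f: "is_l2 (Gset J) f"
    and u: "is_l2 (Gset J) u" "A u = f"
    and alpha: "0 < \<alpha>" "\<alpha> < 1 / sqrt (cond_number (Gset J) A)"
    and lam: "lam > 0"
      "\<alpha> \<le> (1 / sqrt (cond_number (Gset J) A)) * sqrt (1 - opnorm (Gset J) A * lam^2)"
    and Lfin: "finite L0" "\<forall>j\<in>{1..J}. finite (L j)"
    and w: "is_l2 (Gset J) w" "\<forall>x. x \<notin> prodset J L0 L \<longrightarrow> w x = 0"
    and s: "s1 > 0" "s2 > 0"
    and u0: "in_As UNIV s1 (pi0 J u)"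
    and uj: "\<forall>j\<in>{1..J}. in_As UNIV s2 (pij J u j)"
    and star_fin: "finite_diff J L0 L Ls0 Ls"
    and star_adm: "l2norm (Rset (prodset J Ls0 Ls) (\<lambda>x. A w x - f x)) \<ge> \<alpha> * l2norm (\<lambda>x. A w x - f x)"
    and star_min: "\<forall>M0 M. finite_diff J L0 L M0 M \<longrightarrow>
        l2norm (Rset (prodset J M0 M) (\<lambda>x. A w x - f x)) \<ge> \<alpha> * l2norm (\<lambda>x. A w x - f x) \<longrightarrow>
        cost J L0 L Ls0 Ls \<le> cost J L0 L M0 M"
  shows "real (cost J L0 L Ls0 Ls) \<le>
     2 * (((real J + 1) * sqrt (opnorm (Gset J) A) / lam) powr (1 / s1))
       * (l2norm (\<lambda>x. A w x - f x)) powr (- 1 / s1) * (As_norm UNIV s1 (pi0 J u)) powr (1 / s1)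
   + 2 * (((real J + 1) * sqrt (opnorm (Gset J) A) / lam) powr (1 / s2))
       * (l2norm (\<lambda>x. A w x - f x)) powr (- 1 / s2)
       * (\<Sum>j = 1..J. (As_norm UNIV s2 (pij J u j)) powr (1 / s2))"
proof -
  define H where "H = (Gset J :: ('a \<times> (nat \<Rightarrow> nat)) set)"
  have Hne: "H \<noteq> {}" unfolding H_def Gset_def by (simp add: PiE_eq_empty_iff)
  interpret spd H A using A Hne unfolding H_def by unfold_locales auto
  define r where "r = (\<lambda>x. A w x - f x)"
  define R where "R = l2norm r"
  define K where "K = opnorm H A"
  define I where "I = invnorm H A"
  define C where "C = (real J + 1) * sqrt K / lam"
  define a0 where "a0 = As_norm UNIV s1 (pi0 J u)"
  define aj where "aj = (\<lambda>j. As_norm UNIV s2 (pij J u j))"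
  define RHS where "RHS = 2 * (C powr (1 / s1)) * R powr (- 1 / s1) * a0 powr (1 / s1)
   + 2 * (C powr (1 / s2)) * R powr (- 1 / s2) * (\<Sum>j = 1..J. (aj j) powr (1 / s2))"
  have Kp: "K > 0" unfolding K_def by (rule opnorm_pos)
  have Ip: "I > 0" unfolding I_def using invnorm_bound(2)[OF u(1)[folded H_def]] .
  have Cp: "C > 0" unfolding C_def using Kp lam by simp
  have Rn: "R \<ge> 0" unfolding R_def by (rule l2norm_nonneg)
  have goal: "real (cost J L0 L Ls0 Ls) \<le> RHS"
  proof (cases "R = 0")
    case True
    have "finite_diff J L0 L L0 L" unfolding finite_diff_def by simp
    moreover have "l2norm (Rset (prodset J L0 L) r) \<ge> \<alpha> * l2norm r"
      using True l2norm_nonneg unfolding R_def by simp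
    ultimately have "cost J L0 L Ls0 Ls \<le> cost J L0 L L0 L" using star_min unfolding r_def by blast
    hence "cost J L0 L Ls0 Ls = 0" unfolding cost_def by simp
    moreover have "RHS = 0" unfolding RHS_def using True s by simp
    ultimately show ?thesis by simp
  next
    case False
    hence Rp: "R > 0" using Rn by simp
    define \<delta> where "\<delta> = R / C"
    have dp: "\<delta> > 0" unfolding \<delta>_def using Rp Cp by simp
    obtain T0 where T0: "finite T0" "real (card T0) \<le> (a0 / \<delta>) powr (1/s1)"
      "infsum (\<lambda>g. (pi0 J u g)^2) (-T0) \<le> \<delta>^2"
      using approx_exists[OF u0 s(1) dp] unfolding a0_def by blast
    have "\<forall>j\<in>{1..J}. \<exists>T. finite T \<and> real (card T) \<le> (aj j / \<delta>) powr (1/s2)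
            \<and> infsum (\<lambda>n. (pij J u j n)^2) (-T) \<le> \<delta>^2"
      using approx_exists[OF _ s(2) dp] uj unfolding aj_def by blast
    then obtain T where T: "\<forall>j\<in>{1..J}. finite (T j) \<and> real (card (T j)) \<le> (aj j / \<delta>) powr (1/s2)
            \<and> infsum (\<lambda>n. (pij J u j n)^2) (-(T j)) \<le> \<delta>^2"
      by (rule bchoice_iff[THEN iffD1, elim_format]) blast
    define M0 where "M0 = L0 \<union> T0"
    define M where "M = (\<lambda>j. L j \<union> T j)"
    define Lp where "Lp = prodset J M0 M"
    have fd: "finite_diff J L0 L M0 M" unfolding finite_diff_def
    proof
      show "finite (M0 - L0)" unfolding M0_def using T0(1) by (rule finite_subset[rotated]) auto
      show "\<forall>j\<in>{1..J}. finite (M j - L j)"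
      proof
        fix j assume "j \<in> {1..J}"
        hence "finite (T j)" using T by simp
        thus "finite (M j - L j)" unfolding M_def by (rule finite_subset[rotated]) auto
      qed
    qed
    define v where "v = Rset Lp u"
    have v: "is_l2 H v" unfolding v_def H_def by (rule is_l2_Rset[OF u(1)])
    have vL: "\<forall>x. x \<notin> Lp \<longrightarrow> v x = 0" unfolding v_def Rset_def by simp
    have sub: "prodset J L0 L \<subseteq> Lp" unfolding Lp_def prodset_def M0_def M_def
      by (intro Sigma_mono PiE_mono) auto
    have wL: "\<forall>x. x \<notin> Lp \<longrightarrow> w x = 0" using w(2) sub by blast
    have tb: "(l2norm (\<lambda>x. u x - v x))^2 \<le> (real J + 1) * \<delta>^2"
      unfolding v_def Lp_def
    proof (rule tail_bound[where T=T, OF u(1) T0(3)])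
      show "\<forall>j\<in>{1..J}. infsum (\<lambda>n. (pij J u j n)^2) (-(T j)) \<le> \<delta>^2" using T by blast
      show "T0 \<subseteq> M0" unfolding M0_def by blast
      show "\<forall>j\<in>{1..J}. T j \<subseteq> M j" unfolding M_def by blast
    qed
    have approx: "K * (l2norm (\<lambda>x. u x - v x))^2 \<le> lam^2 * R^2"
    proof -
      have "K * (l2norm (\<lambda>x. u x - v x))^2 \<le> K * ((real J + 1) * \<delta>^2)"
        using tb Kp by simp
      also have "\<dots> = K * (real J + 1) * R^2 / C^2" unfolding \<delta>_def by (simp add: power_divide)
      also have "\<dots> = lam^2 * R^2 / (real J + 1)"
      proof -
        have C2: "C^2 = (real J + 1)^2 * K / lam^2" unfolding C_def using Kp
          by (simp add: power_divide power_mult_distrib)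
        have j1: "real J + 1 > 0" by simp
        show ?thesis unfolding C2 using alg_aux[OF Kp j1 lam(1)] .
      qed
      also have "\<dots> \<le> lam^2 * R^2"
      proof -
        have x0: "0 \<le> lam^2 * R^2" by simp
        hence "0 \<le> lam^2 * R^2 * real J" by simp
        hence "lam^2 * R^2 \<le> lam^2 * R^2 * (real J + 1)" by (simp add: algebra_simps)
        thus ?thesis by (simp add: divide_le_eq)
      qed
      finally show ?thesis .
    qed
    have Au: "(\<lambda>x. A w x - A u x) = r" unfolding r_def using u(2) by simp
    have bulk': "R^2 * (1 - K * lam^2) \<le> cond_number H A * (l2norm (Rset Lp r))^2"
      using bulk[OF u(1)[folded H_def] w(1)[folded H_def] v wL vL] approx
      unfolding Au R_def K_def by blast
    have kap: "cond_number H A = K * I" unfolding cond_number_def K_def I_def ..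
    have kp: "cond_number H A > 0" using kap Kp Ip by simp
    have sq: "sqrt (1 - K * lam^2) > 0"
    proof -
      have "0 < \<alpha>" by (rule alpha(1))
      also have "\<alpha> \<le> (1 / sqrt (cond_number H A)) * sqrt (1 - K * lam^2)"
        using lam(2) unfolding H_def K_def .
      finally have "0 < sqrt (1 - K * lam^2) / sqrt (cond_number H A)" by simp
      moreover have "0 < sqrt (cond_number H A)" using kp by simp
      ultimately show ?thesis by (simp add: zero_less_divide_iff)
    qed
    hence om: "1 - K * lam^2 > 0" by simp
    have "\<alpha>^2 \<le> ((1 / sqrt (cond_number H A)) * sqrt (1 - K * lam^2))^2"
      using lam(2) alpha(1) unfolding H_def K_def by (intro power_mono) auto
    also have "\<dots> = (1 - K * lam^2) / cond_number H A"
      using kp om by (simp add: power_mult_distrib power_divide)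
    finally have a2: "\<alpha>^2 \<le> (1 - K * lam^2) / cond_number H A" .
    have "(\<alpha> * R)^2 \<le> (1 - K * lam^2) / cond_number H A * R^2"
      using mult_right_mono[OF a2, of "R^2"] by (simp add: power_mult_distrib)
    also have "\<dots> \<le> (l2norm (Rset Lp r))^2"
      using bulk' kp by (simp add: divide_le_eq mult.commute)
    finally have sqle: "(\<alpha> * R)^2 \<le> (l2norm (Rset Lp r))^2" .
    have "\<alpha> * R \<le> l2norm (Rset Lp r)"
      using power2_le_imp_le[OF sqle l2norm_nonneg] .
    hence adm: "l2norm (Rset (prodset J M0 M) (\<lambda>x. A w x - f x)) \<ge> \<alpha> * l2norm (\<lambda>x. A w x - f x)"
      unfolding Lp_def R_def r_def .
    have c1: "cost J L0 L Ls0 Ls \<le> cost J L0 L M0 M" using star_min fd adm by blast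
    have c2: "real (cost J L0 L M0 M) \<le> real (card T0) + (\<Sum>j = 1..J. real (card (T j)))"
    proof -
      have "card (M0 - L0) \<le> card T0" unfolding M0_def using T0(1) by (intro card_mono) auto
      moreover have "(\<Sum>j = 1..J. card (M j - L j)) \<le> (\<Sum>j = 1..J. card (T j))"
        unfolding M_def using T by (intro sum_mono card_mono) auto
      ultimately have "cost J L0 L M0 M \<le> card T0 + (\<Sum>j = 1..J. card (T j))"
        unfolding cost_def by simp
      thus ?thesis by (simp flip: of_nat_sum)
    qed
    define X0 where "X0 = C powr (1 / s1) * R powr (- 1 / s1) * a0 powr (1 / s1)"
    define Xj where "Xj = (\<lambda>j. C powr (1 / s2) * R powr (- 1 / s2) * (aj j) powr (1 / s2))"
    have e0: "(a0 / \<delta>) powr (1/s1) = X0" unfolding X0_def \<delta>_def by (rule pw_split[OF Rp Cp])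
    have ej: "(aj j / \<delta>) powr (1/s2) = Xj j" for j unfolding Xj_def \<delta>_def by (rule pw_split[OF Rp Cp])
    have X0n: "X0 \<ge> 0" unfolding X0_def by simp
    have Xjn: "Xj j \<ge> 0" for j unfolding Xj_def by simp
    have "real (cost J L0 L Ls0 Ls) \<le> real (card T0) + (\<Sum>j = 1..J. real (card (T j)))"
      using c1 c2 by linarith
    also have "\<dots> \<le> X0 + (\<Sum>j = 1..J. Xj j)"
    proof (rule add_mono)
      show "real (card T0) \<le> X0" using T0(2) e0 by simp
      show "(\<Sum>j = 1..J. real (card (T j))) \<le> (\<Sum>j = 1..J. Xj j)"
      proof (rule sum_mono)
        fix j assume "j \<in> {1..J}"
        hence "real (card (T j)) \<le> (aj j / \<delta>) powr (1/s2)" using T by blast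
        thus "real (card (T j)) \<le> Xj j" using ej[of j] by simp
      qed
    qed
    also have "\<dots> \<le> 2 * X0 + 2 * (\<Sum>j = 1..J. Xj j)"
      using X0n Xjn by (simp add: sum_nonneg)
    also have "\<dots> = RHS" unfolding RHS_def X0_def Xj_def
      by (simp add: sum_distrib_left mult_ac)
    finally show ?thesis .
  qed
  thus ?thesis unfolding RHS_def C_def K_def R_def r_def a0_def aj_def H_def .
qed


end
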